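(* Let $\lambda>0$, $\gamma>0$, let $\beta_1=\beta_1(\gamma)$ be the unique positive solution of $\frac{\sqrt\pi}{2}\gamma x(1+x)^{1/2}(3+x)=1$, and let $0\le\beta<\beta_1$. Let $\varphi$ be the unique solution, within the set $K$ of bounded analytic functions $h:[0,\lambda]\to\mathbb{R}$ with $0\le h\le 1$, of \begin{align*} &[(1+\beta y(\eta))y'(\eta)]'+2\eta y'(\eta)=0, \quad 0<\eta<\lambda,\\ &y'(0)+\beta y(0)y'(0)-\gamma y(0)=0,\\ &y(\lambda)=1. \end{align*} Then for all $0<\eta<\lambda$: $0\le\varphi(\eta)\le 1$, $\varphi'(\eta)>0$ and $\varphi''(\eta)<0$. *)

theory Defs
  imports "HOL-Analysis.Analysis"
begin

definition beta1 :: "real \<Rightarrow> real" where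
  "beta1 \<gamma> = (THE x. x > 0 \<and> sqrt pi / 2 * \<gamma> * x * sqrt (1 + x) * (3 + x) = 1)"

definition real_analytic_on :: "(real \<Rightarrow> real) \<Rightarrow> real set \<Rightarrow> bool" where
  "real_analytic_on h S \<longleftrightarrow>
     (\<forall>x\<in>S. \<exists>r>0. \<exists>c::nat \<Rightarrow> real.
        \<forall>y\<in>S. \<bar>y - x\<bar> < r \<longrightarrow> (\<lambda>n. c n * (y - x) ^ n) sums h y)"

definition classK :: "real \<Rightarrow> (real \<Rightarrow> real) set" where
  "classK lam = {h. real_analytic_on h {0..lam} \<and> bounded (h ` {0..lam})
                    \<and> (\<forall>x\<in>{0..lam}. 0 \<le> h x \<and> h x \<le> 1)}"

definition is_solution :: "real \<Rightarrow> real \<Rightarrow> real \<Rightarrow> (real \<Rightarrow> real) \<Rightarrow> bool" where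
  "is_solution \<beta> \<gamma> lam h \<longleftrightarrow>
     (\<exists>h'. (\<forall>x\<in>{0..lam}. (h has_real_derivative h' x) (at x within {0..lam}))
        \<and> (\<forall>\<eta>\<in>{0<..<lam}. \<exists>g. ((\<lambda>x. (1 + \<beta> * h x) * h' x) has_real_derivative g) (at \<eta>)
                                \<and> g + 2 * \<eta> * h' \<eta> = 0)
        \<and> h' 0 + \<beta> * h 0 * h' 0 - \<gamma> * h 0 = 0
        \<and> h lam = 1)"

end

theory Submission
  imports Defs
begin

theorem mainTheorem8:
  fixes lam \<gamma> \<beta> :: real and \<phi> :: "real \<Rightarrow> real"
  assumes "lam > 0" and "\<gamma> > 0"
    and "0 \<le> \<beta>" and "\<beta> < beta1 \<gamma>"
    and "\<phi> \<in> classK lam" and "is_solution \<beta> \<gamma> lam \<phi>"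
    and "\<forall>h. h \<in> classK lam \<and> is_solution \<beta> \<gamma> lam h \<longrightarrow> (\<forall>x\<in>{0..lam}. h x = \<phi> x)"
  shows "\<forall>\<eta>\<in>{0<..<lam}. 0 \<le> \<phi> \<eta> \<and> \<phi> \<eta> \<le> 1 \<and> deriv \<phi> \<eta> > 0 \<and> deriv (deriv \<phi>) \<eta> < 0"
proof -
  have lam: "lam > 0" and gam: "\<gamma> > 0" and bet: "0 \<le> \<beta>" using assms by auto
  have bnd: "\<And>x. x \<in> {0..lam} \<Longrightarrow> 0 \<le> \<phi> x \<and> \<phi> x \<le> 1"
    using assms(5) unfolding classK_def by auto
  obtain h' where hw: "\<And>x. x\<in>{0..lam} \<Longrightarrow> (\<phi> has_real_derivative h' x) (at x within {0..lam})"
    and hg: "\<And>\<eta>. \<eta>\<in>{0<..<lam} \<Longrightarrow> \<exists>g. ((\<lambda>x. (1 + \<beta> * \<phi> x) * h' x) has_real_derivative g) (at \<eta>)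
                                \<and> g + 2 * \<eta> * h' \<eta> = 0"
    and h0: "h' 0 + \<beta> * \<phi> 0 * h' 0 - \<gamma> * \<phi> 0 = 0"
    and hl: "\<phi> lam = 1"
    using assms(6) unfolding is_solution_def by blast
  define F where "F t = (1 + \<beta> * \<phi> t) * h' t" for t
  have pos: "1 + \<beta> * \<phi> t \<ge> 1" if "t \<in> {0..lam}" for t
    using bnd[OF that] bet by simp
  have hD: "(\<phi> has_real_derivative h' t) (at t)" if "t \<in> {0<..<lam}" for t
  proof -
    have "t \<in> interior {0..lam}" using that by auto
    then show ?thesis using hw[of t] that at_within_interior by fastforce
  qed
  have FD: "(F has_real_derivative (-2*t*h' t)) (at t)" if tt: "t \<in> {0<..<lam}" for t
  proof -
    obtain g where "((\<lambda>x. (1 + \<beta> * \<phi> x) * h' x) has_real_derivative g) (at t)"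
      "g + 2 * t * h' t = 0" using hg[OF tt] by blast
    then show ?thesis unfolding F_def[abs_def] by (metis add.commute add_eq_0_iff mult_minus_left)
  qed
  have h'F: "h' t = F t / (1 + \<beta> * \<phi> t)" if "t \<in> {0..lam}" for t
    using pos[OF that] unfolding F_def by simp
  have contphi: "continuous_on {0..lam} \<phi>" using hw by (rule DERIV_continuous_on)
  have Fcont: "isCont F t" if "t \<in> {0<..<lam}" for t
    using FD[OF that] by (rule DERIV_isCont)
  have Fnz: "F t \<noteq> 0" if t: "t \<in> {0<..<lam}" for t
  proof
    assume Ft: "F t = 0"
    have F0: "F s = 0" if s: "s \<in> {0<..<lam}" for s
    proof (cases "s \<le> t")
      case True
      let ?G = "\<lambda>x. (F x)^2 * exp (4*lam*x)"
      have "?G s \<le> ?G t"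
      proof (rule DERIV_nonneg_imp_nondecreasing[OF True])
        fix x assume x: "s \<le> x" "x \<le> t"
        then have xi: "x \<in> {0<..<lam}" using s t by auto
        have d: "(?G has_real_derivative
            (2 * F x * (-2*x*h' x) * exp (4*lam*x) + (F x)^2 * (exp (4*lam*x) * (4*lam)))) (at x)"
          by (rule derivative_eq_intros FD[OF xi] refl | simp)+
        have p1: "1 + \<beta> * \<phi> x \<ge> 1" using pos xi by auto
        have "x * (F x)^2 / (1 + \<beta> * \<phi> x) \<le> x * (F x)^2"
          using divide_left_mono[OF p1, of "x * (F x)^2"] p1 xi by simp
        also have "\<dots> \<le> lam * (F x)^2" using xi by (simp add: mult_right_mono)
        finally have fin: "x * (F x)^2 / (1 + \<beta> * \<phi> x) \<le> lam * (F x)^2" .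
        have "2 * F x * (-2*x*h' x) = -4 * (x * (F x)^2 / (1 + \<beta> * \<phi> x))"
          using h'F[of x] xi by (simp add: power2_eq_square)
        then have "2 * F x * (-2*x*h' x) + (F x)^2 * (4*lam) \<ge> 0"
          using fin mult.commute[of "(F x)^2" "4*lam"] by linarith
        then have "0 \<le> (2 * F x * (-2*x*h' x) + (F x)^2 * (4*lam)) * exp (4*lam*x)" by simp
        then show "\<exists>y. (?G has_real_derivative y) (at x) \<and> 0 \<le> y"
          using d by (intro exI[of _ "2 * F x * (-2*x*h' x) * exp (4*lam*x) + (F x)^2 * (exp (4*lam*x) * (4*lam))"]) (auto simp: algebra_simps)
      qed
      then have "?G s \<le> 0" using Ft by simp
      then have "(F s)^2 \<le> 0" by (simp add: mult_le_0_iff)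
      then show ?thesis by simp
    next
      case False
      let ?G = "\<lambda>x. - ((F x)^2)"
      have "?G t \<le> ?G s"
      proof (rule DERIV_nonneg_imp_nondecreasing[of t s ?G])
        show "t \<le> s" using False by simp
        fix x assume x: "t \<le> x" "x \<le> s"
        then have xi: "x \<in> {0<..<lam}" using s t by auto
        have d: "(?G has_real_derivative - (2 * F x * (-2*x*h' x))) (at x)"
          by (rule derivative_eq_intros FD[OF xi] refl | simp)+
        have p1: "1 + \<beta> * \<phi> x \<ge> 1" using pos xi by auto
        have "0 \<le> x * (F x)^2 / (1 + \<beta> * \<phi> x)" using xi p1 by simp
        moreover have "2 * F x * (-2*x*h' x) = -4 * (x * (F x)^2 / (1 + \<beta> * \<phi> x))"
          using h'F[of x] xi by (simp add: power2_eq_square)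
        ultimately have "0 \<le> - (2 * F x * (-2*x*h' x))" by linarith
        then show "\<exists>y. (?G has_real_derivative y) (at x) \<and> 0 \<le> y" using d by blast
      qed
      then show ?thesis using Ft by simp
    qed
    have h'0: "h' s = 0" if "s \<in> {0<..<lam}" for s
      using F0[OF that] h'F[of s] that by simp
    have const: "\<phi> s = 1" if s: "s \<in> {0..lam}" for s
    proof (cases "s = lam")
      case False
      then have sl: "s < lam" using s by auto
      have c: "continuous_on {s..lam} \<phi>" by (rule continuous_on_subset[OF contphi]) (use s in auto)
      have a: "\<phi> s \<le> \<phi> lam"
      proof (rule DERIV_nonneg_imp_increasing_open[OF _ _ c])
        fix x assume "s < x" "x < lam"
        then have xi: "x \<in> {0<..<lam}" using s by auto
        show "\<exists>y. (\<phi> has_real_derivative y) (at x) \<and> 0 \<le> y"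
          using hD[OF xi] h'0[OF xi] by auto
      qed (use sl in auto)
      have b: "(\<lambda>x. - \<phi> x) s \<le> (\<lambda>x. - \<phi> x) lam"
      proof (rule DERIV_nonneg_imp_increasing_open[of s lam "\<lambda>x. - \<phi> x"])
        show "continuous_on {s..lam} (\<lambda>x. - \<phi> x)" using c by (intro continuous_intros)
        fix x assume "s < x" "x < lam"
        then have xi: "x \<in> {0<..<lam}" using s by auto
        show "\<exists>y. ((\<lambda>x. - \<phi> x) has_real_derivative y) (at x) \<and> 0 \<le> y"
          using DERIV_minus[OF hD[OF xi]] h'0[OF xi] by auto
      qed (use sl in auto)
      show ?thesis using a b hl by simp
    qed (use hl in simp)
    have "(\<phi> has_real_derivative 0) (at 0 within {0..lam})"
    proof (rule has_field_derivative_transform_within[of "\<lambda>x. 1" 0 0 "{0..lam}" 1])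
      show "((\<lambda>x. 1) has_real_derivative 0) (at 0 within {0..lam})" by simp
    qed (use lam const in auto)
    moreover have "at 0 within {0..lam} \<noteq> (bot :: real filter)"
      using lam by (simp add: at_within_Icc_at_right)
    ultimately have "h' 0 = 0" using has_field_derivative_unique hw[of 0] lam by force
    then show False using h0 const[of 0] lam gam by simp
  qed
  have Fpos: "F t > 0" if t: "t \<in> {0<..<lam}" for t
  proof (rule ccontr)
    assume "\<not> F t > 0"
    then have Fn: "F t < 0" using Fnz[OF t] by simp
    have c: "continuous_on {t..lam} \<phi>" by (rule continuous_on_subset[OF contphi]) (use t in auto)
    obtain l z where z: "t < z" "z < lam" "(\<phi> has_real_derivative l) (at z)" "\<phi> lam - \<phi> t = (lam - t) * l"
      using MVT[of t lam \<phi>] t c hD real_differentiable_def by (smt (verit) greaterThanLessThan_iff)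
    have zi: "z \<in> {0<..<lam}" using z t by auto
    have "l = h' z" using DERIV_unique[OF z(3) hD[OF zi]] .
    moreover have "\<phi> lam - \<phi> t \<ge> 0" using hl bnd[of t] t by auto
    ultimately have "h' z \<ge> 0" using z(4) t by (simp add: zero_le_mult_iff)
    then have "F z \<ge> 0" using pos[of z] zi unfolding F_def by simp
    then have Fz: "F z > 0" using Fnz[OF zi] by simp
    obtain x where x: "t \<le> x" "x \<le> z" "F x = 0"
      using IVT[of F t 0 z] Fn Fz z zi t Fcont by (smt (verit) greaterThanLessThan_iff)
    have "x \<in> {0<..<lam}" using x t z by auto
    then show False using Fnz x by blast
  qed
  show ?thesis
  proof
    fix \<eta> assume e: "\<eta> \<in> {0<..<lam}"
    have h'p: "h' \<eta> > 0" using Fpos[OF e] h'F[of \<eta>] pos[of \<eta>] e by simp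
    have dphi: "deriv \<phi> t = h' t" if "t \<in> {0<..<lam}" for t
      using hD[OF that] by (rule DERIV_imp_deriv)
    let ?p = "1 + \<beta> * \<phi> \<eta>"
    have pp: "?p \<ge> 1" using pos e by auto
    have "((\<lambda>t. F t / (1 + \<beta> * \<phi> t)) has_real_derivative
       ((-2*\<eta>*h' \<eta>) * ?p - F \<eta> * (\<beta> * h' \<eta>)) / (?p * ?p)) (at \<eta>)"
      by (rule derivative_eq_intros FD[OF e] hD[OF e] refl | use pp in simp)+
    then have "(deriv \<phi> has_real_derivative
       ((-2*\<eta>*h' \<eta>) * ?p - F \<eta> * (\<beta> * h' \<eta>)) / (?p * ?p)) (at \<eta>)"
      by (rule has_field_derivative_transform_within_open[of _ _ _ "{0<..<lam}"])
        (use e dphi h'F in auto)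
    then have dd: "deriv (deriv \<phi>) \<eta> = ((-2*\<eta>*h' \<eta>) * ?p - F \<eta> * (\<beta> * h' \<eta>)) / (?p * ?p)"
      by (rule DERIV_imp_deriv)
    have "(-2*\<eta>*h' \<eta>) * ?p < 0" using e h'p pp by (simp add: mult_pos_pos)
    moreover have "F \<eta> * (\<beta> * h' \<eta>) \<ge> 0" using Fpos[OF e] h'p bet by simp
    ultimately have "deriv (deriv \<phi>) \<eta> < 0" using dd pp by (simp add: divide_neg_pos)
    then show "0 \<le> \<phi> \<eta> \<and> \<phi> \<eta> \<le> 1 \<and> deriv \<phi> \<eta> > 0 \<and> deriv (deriv \<phi>) \<eta> < 0"
      using bnd[of \<eta>] e dphi[OF e] h'p by auto
  qed
qed

end
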